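(* Let $f:\mathbb{R}\to\mathbb{R}$ be twice continuously differentiable. Let $u_1,\dots,u_n\in\mathbb{R}$, let $J=[\min_i u_i,\max_i u_i]$ and assume $f''(v)\neq 0$ for all $v\in J$. Let $t_1<t_2$ and $x_i(t)=x_i(t_1)+f'(u_i)(t-t_1)$, $i=1,\dots,n$, be characteristic particles with $x_1(t)<x_2(t)<\dots<x_n(t)$ for all $t\in[t_1,t_2]$. For each $t$ let $u(\cdot,t)$ be the interpolant of the particles $(x_i(t),u_i)$ defined below. Then $u$ is a classical (continuous) solution of $u_t+(f(u))_x=0$: it is continuous on $\{(x,t):t\in[t_1,t_2],\ x_1(t)\le x\le x_n(t)\}$ and satisfies $u_t+(f(u))_x=0$ at every point $(x,t)$ with $t\in(t_1,t_2)$ and $x_i(t)<x<x_{i+1}(t)$ for some $i$. In particular, for all $t\in[t_1,t_2]$ and $i=1,\dots,n-1$, $$\int_{x_i(t)}^{x_{i+1}(t)}u(x,t)\,\mathrm{d}x=\big(x_{i+1}(t)-x_i(t)\big)\,a(u_i,u_{i+1}).$$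
   Context: Interpolant: given particles $(x_i,u_i)$ with $x_1<\dots<x_n$, on $[x_i,x_{i+1}]$ define $u$ as the constant $u_i$ if $u_i=u_{i+1}$; otherwise $u$ is the inverse of the strictly monotone map $v\mapsto x_i+\frac{f'(v)-f'(u_i)}{f'(u_{i+1})-f'(u_i)}(x_{i+1}-x_i)$ on the closed interval with endpoints $u_i,u_{i+1}$. For $g:\mathbb{R}\to\mathbb{R}$ write $[g(u)]_{a}^{b}=g(b)-g(a)$. For $v_1\neq v_2$ the nonlinear average is $a(v_1,v_2)=\frac{[f'(u)u-f(u)]_{v_1}^{v_2}}{[f'(u)]_{v_1}^{v_2}}=\frac{\int_{v_1}^{v_2}f''(u)u\,\mathrm{d}u}{\int_{v_1}^{v_2}f''(u)\,\mathrm{d}u}$, and $a(v,v)=v$. *)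

theory Defs
  imports "HOL-Analysis.Analysis"
begin

definition interp_piece ::
  "(real \<Rightarrow> real) \<Rightarrow> real \<Rightarrow> real \<Rightarrow> real \<Rightarrow> real \<Rightarrow> real \<Rightarrow> real" where
  "interp_piece f' xl xr ul ur x =
     (if ul = ur then ul
      else (THE v. v \<in> {min ul ur..max ul ur} \<and>
              x = xl + (f' v - f' ul) / (f' ur - f' ul) * (xr - xl)))"

definition interpolant ::
  "(real \<Rightarrow> real) \<Rightarrow> nat \<Rightarrow> (nat \<Rightarrow> real) \<Rightarrow> (nat \<Rightarrow> real) \<Rightarrow> real \<Rightarrow> real" where
  "interpolant f' n xs us x =
     (if \<exists>i\<in>{1..<n}. xs i \<le> x \<and> x \<le> xs (Suc i)
      then (let i = (LEAST i. i \<in> {1..<n} \<and> xs i \<le> x \<and> x \<le> xs (Suc i))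
            in interp_piece f' (xs i) (xs (Suc i)) (us i) (us (Suc i)) x)
      else 0)"

definition nl_avg :: "(real \<Rightarrow> real) \<Rightarrow> (real \<Rightarrow> real) \<Rightarrow> real \<Rightarrow> real \<Rightarrow> real" where
  "nl_avg f f' v1 v2 =
     (if v1 = v2 then v1
      else ((f' v2 * v2 - f v2) - (f' v1 * v1 - f v1)) / (f' v2 - f' v1))"

end

theory Submission
  imports Defs
begin


lemma conv_between:
  fixes p q th :: real
  assumes "0 \<le> th" "th \<le> 1"
  shows "min p q \<le> p + th * (q - p)" "p + th * (q - p) \<le> max p q"
proof -
  have a: "th * (q - p) \<le> q - p" if "p \<le> q" using that assms by (simp add: mult_left_le_one_le)
  have b: "th * (p - q) \<le> p - q" if "q \<le> p" using that assms by (simp add: mult_left_le_one_le)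
  have c: "0 \<le> th * (q - p)" if "p \<le> q" using that assms by simp
  have d: "0 \<le> th * (p - q)" if "q \<le> p" using that assms by simp
  have e: "th * (p - q) = - (th * (q - p))" by (simp add: algebra_simps)
  show "min p q \<le> p + th * (q - p)" "p + th * (q - p) \<le> max p q"
    using a b c d e by (cases "p \<le> q"; simp add: min_def max_def; linarith)+
qed

lemma conv_between_strict:
  fixes p q th :: real
  assumes "0 < th" "th < 1" "p \<noteq> q"
  shows "min p q < p + th * (q - p)" "p + th * (q - p) < max p q"
proof -
  have a: "th * (q - p) < q - p" if "p < q" using that assms by simp
  have b: "th * (p - q) < p - q" if "q < p" using that assms by simp
  have c: "0 < th * (q - p)" if "p < q" using that assms by simp
  have d: "0 < th * (p - q)" if "q < p" using that assms by simp
  have e: "th * (p - q) = - (th * (q - p))" by (simp add: algebra_simps)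
  show "min p q < p + th * (q - p)" "p + th * (q - p) < max p q"
    using a b c d e assms(3) by (cases "p < q"; simp add: min_def max_def; linarith)+
qed

context
  fixes f f' f'' :: "real \<Rightarrow> real"
  assumes df: "\<And>v. (f has_real_derivative f' v) (at v)"
    and df': "\<And>v. (f' has_real_derivative f'' v) (at v)"
begin

lemma cont_f': "continuous_on S f'"
  by (meson DERIV_isCont continuous_at_imp_continuous_on df')

lemma cont_f: "continuous_on S f"
  by (meson DERIV_isCont continuous_at_imp_continuous_on df)

lemma inj_f':
  assumes nz: "\<And>v. v \<in> {a..b} \<Longrightarrow> f'' v \<noteq> 0"
  shows "inj_on f' {a..b}"
proof (rule linorder_inj_onI')
  fix v1 v2 assume v: "v1 \<in> {a..b}" "v2 \<in> {a..b}" "v1 < v2"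
  show "f' v1 \<noteq> f' v2"
  proof
    assume eq: "f' v1 = f' v2"
    have "\<exists>z. v1 < z \<and> z < v2 \<and> (\<lambda>v. f'' z * v) = (\<lambda>v. 0)"
      using Rolle_deriv[OF v(3) eq cont_f', of "\<lambda>x. (*) (f'' x)"] df'
      unfolding has_field_derivative_def by blast
    then obtain z where z: "v1 < z" "z < v2" "(\<lambda>v. f'' z * v) = (\<lambda>v. 0)" by blast
    then have "f'' z = 0" by (metis mult_1_right)
    moreover have "z \<in> {a..b}" using v z by auto
    ultimately show False using nz by blast
  qed
qed

lemma ex_pre:
  assumes "a \<le> b" "min (f' a) (f' b) \<le> y" "y \<le> max (f' a) (f' b)"
  shows "\<exists>v\<in>{a..b}. f' v = y"
proof (cases "f' a \<le> f' b")
  case True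
  then show ?thesis using IVT'[OF _ _ assms(1) cont_f', of y] assms by auto
next
  case False
  then show ?thesis using IVT2'[OF _ _ assms(1) cont_f', of y] assms by auto
qed

lemma piece_val:
  assumes ne: "ul \<noteq> ur" and lr: "xl < xr" and x: "xl \<le> x" "x \<le> xr"
    and nz: "\<And>v. v \<in> {min ul ur..max ul ur} \<Longrightarrow> f'' v \<noteq> 0"
  shows "interp_piece f' xl xr ul ur x =
     the_inv_into {min ul ur..max ul ur} f' (f' ul + (x - xl) / (xr - xl) * (f' ur - f' ul))"
proof -
  define S where "S = {min ul ur..max ul ur}"
  define th where "th = (x - xl) / (xr - xl)"
  define w where "w = f' ul + th * (f' ur - f' ul)"
  have inj: "inj_on f' S" unfolding S_def by (rule inj_f'[OF nz])
  have ulS: "ul \<in> S" "ur \<in> S" unfolding S_def by auto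
  have dne: "f' ur - f' ul \<noteq> 0" using inj ulS ne by (auto dest: inj_onD)
  have th01: "0 \<le> th" "th \<le> 1" unfolding th_def using lr x by auto
  have mm: "min (f' (min ul ur)) (f' (max ul ur)) = min (f' ul) (f' ur)"
           "max (f' (min ul ur)) (f' (max ul ur)) = max (f' ul) (f' ur)"
    by (auto simp: min_def max_def)
  have "\<exists>v\<in>S. f' v = w"
    using ex_pre[of "min ul ur" "max ul ur" w] conv_between[OF th01, of "f' ul" "f' ur"]
    unfolding S_def w_def mm by simp
  then obtain v where v: "v \<in> S" "f' v = w" by blast
  have iff: "x = xl + (f' v' - f' ul) / (f' ur - f' ul) * (xr - xl) \<longleftrightarrow> f' v' = w" for v'
    unfolding w_def th_def using dne lr by (auto simp: field_simps)
  have "(THE v. v \<in> S \<and> x = xl + (f' v - f' ul) / (f' ur - f' ul) * (xr - xl)) = v"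
    using v inj unfolding iff by (auto intro!: the_equality dest: inj_onD)
  moreover have "the_inv_into S f' w = v" using v inj by (metis the_inv_into_f_f)
  ultimately show ?thesis using ne unfolding interp_piece_def S_def w_def th_def by simp
qed

lemma piece_ends:
  assumes lr: "xl < xr"
    and nz: "\<And>v. v \<in> {min ul ur..max ul ur} \<Longrightarrow> f'' v \<noteq> 0"
  shows "interp_piece f' xl xr ul ur xl = ul" "interp_piece f' xl xr ul ur xr = ur"
proof -
  have inj: "inj_on f' {min ul ur..max ul ur}" by (rule inj_f'[OF nz])
  show "interp_piece f' xl xr ul ur xl = ul"
  proof (cases "ul = ur")
    case False
    show ?thesis using piece_val[OF False lr _ _ nz, of xl] lr inj
      by (simp add: the_inv_into_f_f)
  qed (simp add: interp_piece_def)
  show "interp_piece f' xl xr ul ur xr = ur"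
  proof (cases "ul = ur")
    case False
    show ?thesis using piece_val[OF False lr _ _ nz, of xr] lr inj
      by (simp add: the_inv_into_f_f)
  qed (simp add: interp_piece_def)
qed

lemma ginv:
  assumes nz: "\<And>v. v \<in> {min ul ur..max ul ur} \<Longrightarrow> f'' v \<noteq> 0"
    and y: "min (f' ul) (f' ur) \<le> y" "y \<le> max (f' ul) (f' ur)"
  shows "f' (the_inv_into {min ul ur..max ul ur} f' y) = y"
    "the_inv_into {min ul ur..max ul ur} f' y \<in> {min ul ur..max ul ur}"
proof -
  have inj: "inj_on f' {min ul ur..max ul ur}" by (rule inj_f'[OF nz])
  have mm: "min (f' (min ul ur)) (f' (max ul ur)) = min (f' ul) (f' ur)"
           "max (f' (min ul ur)) (f' (max ul ur)) = max (f' ul) (f' ur)"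
    by (auto simp: min_def max_def)
  have "\<exists>v\<in>{min ul ur..max ul ur}. f' v = y"
    using ex_pre[of "min ul ur" "max ul ur" y] y unfolding mm by simp
  then have "y \<in> f' ` {min ul ur..max ul ur}" by auto
  then show "f' (the_inv_into {min ul ur..max ul ur} f' y) = y"
    "the_inv_into {min ul ur..max ul ur} f' y \<in> {min ul ur..max ul ur}"
    using inj by (auto simp: f_the_inv_into_f the_inv_into_f_f)
qed

lemma gcont:
  assumes nz: "\<And>v. v \<in> {min ul ur..max ul ur} \<Longrightarrow> f'' v \<noteq> 0"
  shows "continuous_on {min (f' ul) (f' ur)..max (f' ul) (f' ur)} (the_inv_into {min ul ur..max ul ur} f')"
proof -
  have inj: "inj_on f' {min ul ur..max ul ur}" by (rule inj_f'[OF nz])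
  have c: "continuous_on (f' ` {min ul ur..max ul ur}) (the_inv_into {min ul ur..max ul ur} f')"
    by (rule continuous_on_inv[OF cont_f']) (auto simp: inj the_inv_into_f_f)
  have "{min (f' ul) (f' ur)..max (f' ul) (f' ur)} \<subseteq> f' ` {min ul ur..max ul ur}"
  proof
    fix y assume "y \<in> {min (f' ul) (f' ur)..max (f' ul) (f' ur)}"
    then show "y \<in> f' ` {min ul ur..max ul ur}"
      using ginv[of ul ur y, OF nz] by (metis atLeastAtMost_iff image_eqI)
  qed
  then show ?thesis using c continuous_on_subset by blast
qed

lemma gderiv:
  assumes nz: "\<And>v. v \<in> {min ul ur..max ul ur} \<Longrightarrow> f'' v \<noteq> 0"
    and y: "min (f' ul) (f' ur) < y" "y < max (f' ul) (f' ur)"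
  shows "(the_inv_into {min ul ur..max ul ur} f' has_real_derivative
           inverse (f'' (the_inv_into {min ul ur..max ul ur} f' y))) (at y)"
proof (rule DERIV_inverse_function[OF df' _ y])
  show "f'' (the_inv_into {min ul ur..max ul ur} f' y) \<noteq> 0"
    using ginv(2)[of ul ur y, OF nz] y nz by auto
  show "f' (the_inv_into {min ul ur..max ul ur} f' z) = z"
    if "min (f' ul) (f' ur) < z" "z < max (f' ul) (f' ur)" for z
    using ginv(1)[of ul ur z, OF nz] that by auto
  show "isCont (the_inv_into {min ul ur..max ul ur} f') y"
    using continuous_on_interior[OF gcont[of ul ur, OF nz], of y] y by simp
qed

end

lemma wdt_gen:
  fixes a b c D x t :: real
  assumes "c + D * t \<noteq> 0"
  shows "((\<lambda>s. a + (x - (b + a * s)) / (c + D * s) * D) has_real_derivative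
           - (D * (a + (x - (b + a * t)) / (c + D * t) * D) / (c + D * t))) (at t)"
  using assms
  apply (auto intro!: derivative_eq_intros)
  apply (simp add: divide_simps)
  apply (simp add: algebra_simps power2_eq_square)
  done

lemma xs_mono:
  fixes xs :: "nat \<Rightarrow> real"
  assumes inc: "\<And>j. j \<in> {1..<n} \<Longrightarrow> xs j < xs (Suc j)"
  shows "1 \<le> j \<Longrightarrow> j < k \<Longrightarrow> k \<le> n \<Longrightarrow> xs j < xs k"
proof (induction k)
  case 0 then show ?case by simp
next
  case (Suc k)
  show ?case
  proof (cases "j = k")
    case True then show ?thesis using inc Suc.prems by auto
  next
    case False
    then have "xs j < xs k" using Suc by auto
    also have "xs k < xs (Suc k)" using inc Suc.prems False by auto
    finally show ?thesis .
  qed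
qed

lemma xs_cover:
  fixes xs :: "nat \<Rightarrow> real"
  assumes inc: "\<And>j. j \<in> {1..<n} \<Longrightarrow> xs j < xs (Suc j)"
  shows "1 < m \<Longrightarrow> m \<le> n \<Longrightarrow> xs 1 \<le> x \<Longrightarrow> x \<le> xs m \<Longrightarrow> \<exists>i\<in>{1..<m}. xs i \<le> x \<and> x \<le> xs (Suc i)"
proof (induction m)
  case 0 then show ?case by simp
next
  case (Suc m)
  show ?case
  proof (cases "x \<le> xs m")
    case True
    show ?thesis
    proof (cases "m = 1")
      case True
      then show ?thesis using Suc.prems \<open>x \<le> xs m\<close> by auto
    next
      case False
      then obtain i where "i\<in>{1..<m}" "xs i \<le> x \<and> x \<le> xs (Suc i)"
        using Suc True by auto
      then show ?thesis by auto
    qed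
  next
    case False
    then show ?thesis using Suc.prems by (intro bexI[of _ m]) auto
  qed
qed

lemma interp_eq:
  fixes xs us :: "nat \<Rightarrow> real"
  assumes inc: "\<And>j. j \<in> {1..<n} \<Longrightarrow> xs j < xs (Suc j)"
    and ends: "\<And>j. j \<in> {1..<n} \<Longrightarrow>
        interp_piece f' (xs j) (xs (Suc j)) (us j) (us (Suc j)) (xs j) = us j \<and>
        interp_piece f' (xs j) (xs (Suc j)) (us j) (us (Suc j)) (xs (Suc j)) = us (Suc j)"
    and i: "i \<in> {1..<n}" and x: "xs i \<le> x" "x \<le> xs (Suc i)"
  shows "interpolant f' n xs us x = interp_piece f' (xs i) (xs (Suc i)) (us i) (us (Suc i)) x"
proof -
  let ?P = "\<lambda>i. i \<in> {1..<n} \<and> xs i \<le> x \<and> x \<le> xs (Suc i)"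
  define j where "j = (LEAST i. ?P i)"
  have Pi: "?P i" using i x by auto
  have Pj: "?P j" unfolding j_def by (rule LeastI[of ?P i, OF Pi])
  have ji: "j \<le> i" unfolding j_def by (rule Least_le[of ?P i, OF Pi])
  have ex: "\<exists>i\<in>{1..<n}. xs i \<le> x \<and> x \<le> xs (Suc i)" using Pi by blast
  have "interp_piece f' (xs j) (xs (Suc j)) (us j) (us (Suc j)) x
        = interp_piece f' (xs i) (xs (Suc i)) (us i) (us (Suc i)) x"
  proof (cases "j = i")
    case False
    then have lt: "j < i" using ji by simp
    have "Suc j = i"
    proof (rule ccontr)
      assume "Suc j \<noteq> i"
      then have "xs (Suc j) < xs i" using xs_mono[of n xs, OF inc, of "Suc j" i] lt i by auto
      then show False using Pj x by auto
    qed
    then have "x = xs i" using Pj x by auto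
    then show ?thesis using ends[of j] ends[of i] Pj i \<open>Suc j = i\<close> by auto
  qed simp
  then show ?thesis unfolding interpolant_def j_def[symmetric] using ex by (simp add: Let_def)
qed



theorem corollary2:
  fixes f f' f'' :: "real \<Rightarrow> real"
    and n :: nat
    and us :: "nat \<Rightarrow> real"
    and x0 :: "nat \<Rightarrow> real"
    and t1 t2 :: real
  assumes df: "\<And>v. (f has_real_derivative f' v) (at v)"
    and df': "\<And>v. (f' has_real_derivative f'' v) (at v)"
    and cont: "continuous_on UNIV f''"
    and n: "1 \<le> n"
    and nondeg: "\<And>v. Min (us ` {1..n}) \<le> v \<Longrightarrow> v \<le> Max (us ` {1..n}) \<Longrightarrow> f'' v \<noteq> 0"
    and t12: "t1 < t2"
    and order: "\<And>t i. t \<in> {t1..t2} \<Longrightarrow> i \<in> {1..<n} \<Longrightarrow>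
                   x0 i + f' (us i) * (t - t1) < x0 (Suc i) + f' (us (Suc i)) * (t - t1)"
  defines "X \<equiv> (\<lambda>t i. x0 i + f' (us i) * (t - t1))"
    and "U \<equiv> (\<lambda>x t. interpolant f' n (\<lambda>i. x0 i + f' (us i) * (t - t1)) us x)"
  shows "continuous_on {(x, t). t \<in> {t1..t2} \<and> X t 1 \<le> x \<and> x \<le> X t n} (\<lambda>(x, t). U x t)
         \<and> (\<forall>t \<in> {t1<..<t2}. \<forall>i \<in> {1..<n}. \<forall>x. X t i < x \<and> x < X t (Suc i) \<longrightarrow>
              (\<exists>ut fx. ((\<lambda>s. U x s) has_real_derivative ut) (at t)
                     \<and> ((\<lambda>y. f (U y t)) has_real_derivative fx) (at x)
                     \<and> ut + fx = 0))
         \<and> (\<forall>t \<in> {t1..t2}. \<forall>i \<in> {1..<n}.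
              integral {X t i..X t (Suc i)} (\<lambda>x. U x t)
                = (X t (Suc i) - X t i) * nl_avg f f' (us i) (us (Suc i)))"
proof -
  define g where "g i = the_inv_into {min (us i) (us (Suc i))..max (us i) (us (Suc i))} f'" for i
  define L where "L t i = X t (Suc i) - X t i" for t i
  define w where "w i x t = f' (us i) + (x - X t i) / L t i * (f' (us (Suc i)) - f' (us i))" for i x t
  define pv where "pv i x t = (if us i = us (Suc i) then us i else g i (w i x t))" for i x t
  have Ueq: "U x t = interpolant f' n (X t) us x" for x t unfolding U_def X_def by simp
  have nz: "f'' v \<noteq> 0" if "i \<in> {1..<n}" "v \<in> {min (us i) (us (Suc i))..max (us i) (us (Suc i))}" for i v
  proof -
    have fin: "finite (us ` {1..n})" by simp
    have "Min (us ` {1..n}) \<le> us i" "Min (us ` {1..n}) \<le> us (Suc i)"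
         "us i \<le> Max (us ` {1..n})" "us (Suc i) \<le> Max (us ` {1..n})"
      using that(1) by (auto intro!: Min_le Max_ge)
    then show ?thesis using nondeg that(2) by auto
  qed
  have Lpos: "0 < L t i" if "t \<in> {t1..t2}" "i \<in> {1..<n}" for t i
    using order[OF that] unfolding L_def X_def by simp
  have inc: "X t j < X t (Suc j)" if "t \<in> {t1..t2}" "j \<in> {1..<n}" for t j
    using order[OF that] unfolding X_def by simp
  have Upv: "U x t = pv i x t" if t: "t \<in> {t1..t2}" and i: "i \<in> {1..<n}"
     and x: "X t i \<le> x" "x \<le> X t (Suc i)" for t i x
  proof -
    have "U x t = interp_piece f' (X t i) (X t (Suc i)) (us i) (us (Suc i)) x"
      unfolding Ueq
      by (rule interp_eq[of n "X t" f' us i x, OF inc[OF t] _ i x])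
         (use piece_ends[OF df df' inc[OF t] nz] in auto)
    also have "\<dots> = pv i x t"
    proof (cases "us i = us (Suc i)")
      case True then show ?thesis unfolding pv_def interp_piece_def by simp
    next
      case False
      show ?thesis unfolding pv_def g_def w_def L_def
        using piece_val[OF df df' False inc[OF t i] x nz[OF i]] False by simp
    qed
    finally show ?thesis .
  qed
  have wbetween: "min (f' (us i)) (f' (us (Suc i))) \<le> w i x t \<and> w i x t \<le> max (f' (us i)) (f' (us (Suc i)))"
    if t: "t \<in> {t1..t2}" and i: "i \<in> {1..<n}" and x: "X t i \<le> x" "x \<le> X t (Suc i)" for t i x
  proof -
    have th: "0 \<le> (x - X t i) / L t i" "(x - X t i) / L t i \<le> 1"
      using Lpos[OF t i] x unfolding L_def by auto
    show ?thesis using conv_between[OF th, of "f' (us i)" "f' (us (Suc i))"] unfolding w_def by simp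
  qed
  have P3: "integral {X t i..X t (Suc i)} (\<lambda>x. U x t)
                = (X t (Suc i) - X t i) * nl_avg f f' (us i) (us (Suc i))"
    if t: "t \<in> {t1..t2}" and i: "i \<in> {1..<n}" for t i
  proof (cases "us i = us (Suc i)")
    case True
    have "integral {X t i..X t (Suc i)} (\<lambda>x. U x t) = integral {X t i..X t (Suc i)} (\<lambda>x. us i)"
      by (rule integral_cong) (use Upv[OF t i] True in \<open>auto simp: pv_def\<close>)
    then show ?thesis using True inc[OF t i] by (simp add: nl_avg_def)
  next
    case False
    define ul where "ul = us i"
    define ur where "ur = us (Suc i)"
    define xl where "xl = X t i"
    define xr where "xr = X t (Suc i)"
    define D where "D = f' ur - f' ul"
    define G where "G z = z * g i z - f (g i z)" for z
    define F where "F y = L t i / D * G (w i y t)" for y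
    have Lt: "L t i = xr - xl" unfolding L_def xl_def xr_def ..
    have Lp: "0 < xr - xl" using Lpos[OF t i] Lt by simp
    have inj: "inj_on f' {min ul ur..max ul ur}" using inj_f'[OF df df' nz[OF i]] unfolding ul_def ur_def .
    have Dne: "D \<noteq> 0" using inj False unfolding D_def ul_def ur_def by (auto dest: inj_onD)
    have gc: "continuous_on {min (f' ul) (f' ur)..max (f' ul) (f' ur)} (g i)"
      using gcont[OF df df' nz[OF i]] unfolding g_def ul_def ur_def .
    have wc: "continuous_on {xl..xr} (\<lambda>y. w i y t)"
      unfolding w_def using Lp Lt by (intro continuous_intros) auto
    have wim: "(\<lambda>y. w i y t) ` {xl..xr} \<subseteq> {min (f' ul) (f' ur)..max (f' ul) (f' ur)}"
      using wbetween[OF t i] unfolding xl_def xr_def ul_def ur_def by auto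
    have Gc: "continuous_on {min (f' ul) (f' ur)..max (f' ul) (f' ur)} G"
      unfolding G_def by (intro continuous_intros gc continuous_on_compose2[OF cont_f[OF df df'] gc]) auto
    have Fc: "continuous_on {xl..xr} F"
      unfolding F_def by (intro continuous_intros continuous_on_compose2[OF Gc wc wim])
    have Gd: "(G has_real_derivative g i z) (at z)"
      if z: "min (f' ul) (f' ur) < z" "z < max (f' ul) (f' ur)" for z
    proof -
      have gd: "(g i has_real_derivative inverse (f'' (g i z))) (at z)"
        using gderiv[OF df df' nz[OF i]] z unfolding g_def ul_def ur_def by blast
      have fg: "f' (g i z) = z"
        using ginv(1)[OF df df', of ul ur z] nz[OF i] z unfolding g_def ul_def ur_def by auto
      have "(G has_real_derivative (1 * g i z + inverse (f'' (g i z)) * z) - f' (g i z) * inverse (f'' (g i z))) (at z)"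
        unfolding G_def by (intro DERIV_diff DERIV_mult DERIV_ident gd DERIV_chain2[OF df gd])
      then show ?thesis using fg by simp
    qed
    have Fd: "(F has_vector_derivative g i (w i y t)) (at y)" if y: "y \<in> {xl<..<xr}" for y
    proof -
      have th: "0 < (y - xl) / (xr - xl)" "(y - xl) / (xr - xl) < 1" using y Lp by auto
      have wb: "min (f' ul) (f' ur) < w i y t" "w i y t < max (f' ul) (f' ur)"
        using conv_between_strict[OF th, of "f' ul" "f' ur"] Dne
        unfolding w_def Lt D_def ul_def ur_def xl_def xr_def by auto
      have wd: "((\<lambda>y. w i y t) has_real_derivative D / L t i) (at y)"
      proof -
        have weq: "(\<lambda>y. w i y t) = (\<lambda>y. f' ul + (y - xl) * (D / L t i))"
          unfolding w_def D_def ul_def ur_def xl_def using Lp Lt by (auto simp: field_simps)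
        show ?thesis unfolding weq using Lp Lt by (auto intro!: derivative_eq_intros)
      qed
      have "(F has_real_derivative L t i / D * (g i (w i y t) * (D / L t i))) (at y)"
        unfolding F_def by (intro DERIV_cmult DERIV_chain2[OF Gd[OF wb] wd])
      then show ?thesis using Dne Lp Lt by (simp add: has_real_derivative_iff_has_vector_derivative)
    qed
    have hi: "((\<lambda>y. g i (w i y t)) has_integral F xr - F xl) {xl..xr}"
      by (rule fundamental_theorem_of_calculus_interior[OF _ Fc Fd]) (use Lp in auto)
    have wl: "w i xl t = f' ul" and wr: "w i xr t = f' ur"
      unfolding w_def Lt ul_def ur_def using Lp by (auto simp: xl_def)
    have gl: "g i (f' ul) = ul"
      using inj by (simp add: g_def the_inv_into_f_f ul_def ur_def)
    have gr: "g i (f' ur) = ur"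
      using inj by (simp add: g_def the_inv_into_f_f ul_def ur_def)
    have "integral {xl..xr} (\<lambda>x. U x t) = integral {xl..xr} (\<lambda>y. g i (w i y t))"
      by (rule integral_cong) (use Upv[OF t i] False in \<open>auto simp: pv_def xl_def xr_def\<close>)
    also have "\<dots> = F xr - F xl" using hi by (rule integral_unique)
    also have "\<dots> = (xr - xl) * nl_avg f f' ul ur"
    proof -
      have nl: "nl_avg f f' ul ur = ((f' ur * ur - f ur) - (f' ul * ul - f ul)) / D"
        using False unfolding nl_avg_def D_def ul_def ur_def by simp
      show ?thesis unfolding F_def wl wr G_def gl gr Lt nl using Dne by (simp add: field_simps)
    qed
    finally show ?thesis unfolding xl_def xr_def ul_def ur_def .
  qed
  have P2: "\<exists>ut fx. ((\<lambda>s. U x s) has_real_derivative ut) (at t)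
                     \<and> ((\<lambda>y. f (U y t)) has_real_derivative fx) (at x)
                     \<and> ut + fx = 0"
    if t0: "t \<in> {t1<..<t2}" and i: "i \<in> {1..<n}" and x: "X t i < x" "x < X t (Suc i)" for t i x
  proof -
    have t: "t \<in> {t1..t2}" using t0 by auto
    define T where "T = {s. t1 < s \<and> s < t2 \<and> X s i < x \<and> x < X s (Suc i)}"
    have oT: "open T" unfolding T_def X_def
      by (intro open_Collect_conj open_Collect_less continuous_intros)
    have tT: "t \<in> T" unfolding T_def using t0 x by auto
    have UT: "U x s = pv i x s" if "s \<in> T" for s
      using that Upv[of s i x] i unfolding T_def by auto
    have UY: "U y t = pv i y t" if "y \<in> {X t i<..<X t (Suc i)}" for y
      using that Upv[OF t i, of y] by auto
    show ?thesis
    proof (cases "us i = us (Suc i)")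
      case True
      have d1: "((\<lambda>s. U x s) has_real_derivative 0) (at t)"
        by (rule has_field_derivative_transform_within_open[OF DERIV_const oT tT])
           (use UT True in \<open>auto simp: pv_def\<close>)
      have d2: "((\<lambda>y. f (U y t)) has_real_derivative 0) (at x)"
        by (rule has_field_derivative_transform_within_open[OF DERIV_const, where S="{X t i<..<X t (Suc i)}"])
           (use UY True x in \<open>auto simp: pv_def\<close>)
      show ?thesis using d1 d2 by auto
    next
      case False
      define ul where "ul = us i"
      define ur where "ur = us (Suc i)"
      define D where "D = f' ur - f' ul"
      have inj: "inj_on f' {min ul ur..max ul ur}" using inj_f'[OF df df' nz[OF i]] unfolding ul_def ur_def .
      have Dne: "D \<noteq> 0" using inj False unfolding D_def ul_def ur_def by (auto dest: inj_onD)
      have Lp: "0 < L t i" using Lpos[OF t i] .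
      have th: "0 < (x - X t i) / L t i" "(x - X t i) / L t i < 1" using x Lp unfolding L_def by auto
      have wb: "min (f' ul) (f' ur) < w i x t" "w i x t < max (f' ul) (f' ur)"
        using conv_between_strict[OF th, of "f' ul" "f' ur"] Dne
        unfolding w_def D_def ul_def ur_def by auto
      have gd: "(g i has_real_derivative inverse (f'' (g i (w i x t)))) (at (w i x t))"
        using gderiv[OF df df' nz[OF i]] wb unfolding g_def ul_def ur_def by blast
      have fg: "f' (g i (w i x t)) = w i x t"
        using ginv(1)[OF df df', of ul ur "w i x t"] nz[OF i] wb unfolding g_def ul_def ur_def by auto
      have wdt: "((\<lambda>s. w i x s) has_real_derivative (- (D * w i x t / L t i))) (at t)"
      proof -
        define a where "a = f' ul"
        define b where "b = x0 i - a * t1"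
        define c where "c = x0 (Suc i) - f' ur * t1 - x0 i + a * t1"
        have Xe: "X s i = b + a * s" for s unfolding X_def a_def b_def ul_def by (simp add: algebra_simps)
        have Le: "L s i = c + D * s" for s
          unfolding L_def X_def a_def c_def D_def ul_def ur_def by (simp add: algebra_simps)
        have weq: "(\<lambda>s. w i x s) = (\<lambda>s. a + (x - (b + a * s)) / (c + D * s) * D)"
          unfolding w_def Xe Le a_def D_def ul_def ur_def by simp
        have "w i x t = a + (x - (b + a * t)) / (c + D * t) * D" using weq by metis
        then show ?thesis unfolding weq Le using wdt_gen[of c D t a x b] Lp Le by simp
      qed
      have wdx: "((\<lambda>y. w i y t) has_real_derivative D / L t i) (at x)"
      proof -
        have weq: "(\<lambda>y. w i y t) = (\<lambda>y. f' ul + (y - X t i) * (D / L t i))"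
          unfolding w_def D_def ul_def ur_def using Lp by (auto simp: field_simps)
        show ?thesis unfolding weq using Lp by (auto intro!: derivative_eq_intros)
      qed
      have d1: "((\<lambda>s. U x s) has_real_derivative inverse (f'' (g i (w i x t))) * (- (D * w i x t / L t i))) (at t)"
        by (rule has_field_derivative_transform_within_open[OF DERIV_chain2[OF gd wdt] oT tT])
           (use UT False in \<open>auto simp: pv_def\<close>)
      have d2: "((\<lambda>y. f (U y t)) has_real_derivative f' (g i (w i x t)) * (inverse (f'' (g i (w i x t))) * (D / L t i))) (at x)"
        by (rule has_field_derivative_transform_within_open[OF DERIV_chain2[OF df DERIV_chain2[OF gd wdx]], where S="{X t i<..<X t (Suc i)}"])
           (use UY False x in \<open>auto simp: pv_def\<close>)
      show ?thesis using d1 d2 unfolding fg by (intro exI conjI) (auto simp: algebra_simps)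
    qed
  qed
  have P1: "continuous_on {(x, t). t \<in> {t1..t2} \<and> X t 1 \<le> x \<and> x \<le> X t n} (\<lambda>(x, t). U x t)"
  proof (cases "n = 1")
    case True
    have "(\<lambda>(x, t). U x t) = (\<lambda>_. 0)"
      using True by (auto simp: U_def interpolant_def fun_eq_iff)
    then show ?thesis by (simp add: continuous_on_const)
  next
    case False
    then have n2: "1 < n" using n by simp
    define Si where "Si i = {p. t1 \<le> snd p \<and> snd p \<le> t2 \<and> X (snd p) i \<le> fst p \<and> fst p \<le> X (snd p) (Suc i)}" for i
    have sub: "{(x, t). t \<in> {t1..t2} \<and> X t 1 \<le> x \<and> x \<le> X t n} \<subseteq> (\<Union>i\<in>{1..<n}. Si i)"
    proof clarify
      fix x t assume a: "t \<in> {t1..t2}" "X t 1 \<le> x" "x \<le> X t n"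
      have "\<exists>i\<in>{1..<n}. X t i \<le> x \<and> x \<le> X t (Suc i)"
        using xs_cover[of n "X t", OF inc[OF a(1)], of n x] n2 a by blast
      then obtain i where "i \<in> {1..<n}" "X t i \<le> x \<and> x \<le> X t (Suc i)" by blast
      then show "(x, t) \<in> (\<Union>i\<in>{1..<n}. Si i)" using a unfolding Si_def by auto
    qed
    have cl: "closed (Si i)" for i unfolding Si_def X_def
      by (intro closed_Collect_conj closed_Collect_le continuous_intros)
    have ci: "continuous_on (Si i) (\<lambda>p. U (fst p) (snd p))" if i: "i \<in> {1..<n}" for i
    proof -
      have eq: "U (fst p) (snd p) = pv i (fst p) (snd p)" if "p \<in> Si i" for p
        using that Upv[of "snd p" i "fst p"] i unfolding Si_def by auto
      have "continuous_on (Si i) (\<lambda>p. pv i (fst p) (snd p))"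
      proof (cases "us i = us (Suc i)")
        case True then show ?thesis unfolding pv_def by (simp add: continuous_on_const)
      next
        case False
        have gc: "continuous_on {min (f' (us i)) (f' (us (Suc i)))..max (f' (us i)) (f' (us (Suc i)))} (g i)"
          using gcont[OF df df' nz[OF i]] unfolding g_def .
        have nz0: "X (snd p) (Suc i) - X (snd p) i \<noteq> 0" if "p \<in> Si i" for p
          using Lpos[of "snd p" i] i that unfolding Si_def L_def by auto
        have wc: "continuous_on (Si i) (\<lambda>p. w i (fst p) (snd p))"
          using nz0 unfolding w_def L_def X_def by (intro continuous_intros) auto
        have wim: "(\<lambda>p. w i (fst p) (snd p)) ` Si i \<subseteq> {min (f' (us i)) (f' (us (Suc i)))..max (f' (us i)) (f' (us (Suc i)))}"
          using wbetween i unfolding Si_def by auto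
        show ?thesis unfolding pv_def using False continuous_on_compose2[OF gc wc wim] by simp
      qed
      then show ?thesis by (rule continuous_on_eq) (simp add: eq)
    qed
    have "continuous_on (\<Union>i\<in>{1..<n}. Si i) (\<lambda>p. U (fst p) (snd p))"
      by (rule continuous_on_closed_Union) (use cl ci in auto)
    then have "continuous_on {(x, t). t \<in> {t1..t2} \<and> X t 1 \<le> x \<and> x \<le> X t n} (\<lambda>p. U (fst p) (snd p))"
      by (rule continuous_on_subset[OF _ sub])
    moreover have "(\<lambda>(x, t). U x t) = (\<lambda>p. U (fst p) (snd p))" by (simp add: fun_eq_iff)
    ultimately show ?thesis by (simp only:)
  qed
  show ?thesis
    apply (intro conjI ballI allI impI)
      apply (rule P1)
     apply (rule P2; blast)
    apply (rule P3; blast)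
    done
qed
end
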